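(* The function $K_2:[0,1]\times[0,1]\to\mathbb R$ is not continuous at the point $(0,0)$. Furthermore, there is no function $f:[0,1]\times[0,1]\to\mathbb R$ that is continuous at $(0,0)$ and for which the set $\{(x,y)\in[0,1]\times[0,1]: f(x,y)=K_2(x,y)\}$ is dense in $[0,1]\times[0,1]$.
   Context: Let $K:[0,1]\times[0,1]\to\mathbb R$ be defined by $K(x,y)=\frac12-\{(xy)^{-1}\}$ if $0<x,y\le 1$, and $K(x,y)=0$ if $0\le x,y\le1$ and $xy=0$, where $\{\alpha\}=\alpha-\lfloor\alpha\rfloor$. Define $K_2(x,y)=\int_0^1K(x,z)K(z,y)\,dz$ for $0\le x,y\le1$. *)

theory Defs
  imports "HOL-Analysis.Analysis"
begin

definition K :: "real \<Rightarrow> real \<Rightarrow> real" where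
  "K x y = (if x * y = 0 then 0 else 1/2 - frac (1 / (x * y)))"

definition K2 :: "real \<Rightarrow> real \<Rightarrow> real" where
  "K2 x y = integral {0..1} (\<lambda>z. K x z * K z y)"

end

theory Submission
  imports Defs
begin
lemma Kmeas: "(\<lambda>z. K x z * K z y) \<in> borel_measurable borel"
  unfolding K_def frac_def by measurable

lemma bdd_meas_integrable:
  fixes f :: "real \<Rightarrow> real"
  assumes "f \<in> borel_measurable borel" "\<And>x. \<bar>f x\<bar> \<le> B"
  shows "f integrable_on {a..b}"
proof (rule measurable_bounded_by_integrable_imp_integrable_real[where g="\<lambda>_. B"])
  show "f \<in> borel_measurable (lebesgue_on {a..b})"
    using assms(1) by (simp add: measurable_completion measurable_restrict_space1)
qed (use assms in auto)

lemma frac_half_bound: "\<bar>1/2 - frac t\<bar> \<le> 1/2"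
proof -
  have "0 \<le> frac t" "frac t < 1" by (auto simp: frac_lt_1)
  then show ?thesis by linarith
qed

lemma K_bound: "\<bar>K x y\<bar> \<le> 1/2"
  unfolding K_def using frac_half_bound by auto

lemma Kprod_bound: "\<bar>K x z * K z y\<bar> \<le> 1/4"
proof -
  have "\<bar>K x z * K z y\<bar> = \<bar>K x z\<bar> * \<bar>K z y\<bar>" by (simp add: abs_mult)
  also have "\<dots> \<le> 1/2 * (1/2)" using K_bound[of x z] K_bound[of z y] by (intro mult_mono) auto
  finally show ?thesis by simp
qed

lemma Kprod_integrable: "(\<lambda>z. K x z * K z y) integrable_on {a..b}"
  by (rule bdd_meas_integrable[OF Kmeas Kprod_bound])

lemma countable_negligible: "countable (N::real set) \<Longrightarrow> negligible N"
proof -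
  assume "countable N"
  then have "negligible (\<Union> ((\<lambda>x. {x}) ` N))"
    by (intro negligible_countable_Union) auto
  then show ?thesis by simp
qed

lemma countable_inv_ints: 
  assumes "(a::real) \<noteq> 0"
  shows "countable {z. 1/(a*z) \<in> \<int>}"
proof -
  have "{z. 1/(a*z) \<in> \<int>} \<subseteq> (\<lambda>k::int. 1/(a * of_int k)) ` UNIV"
  proof
    fix z assume "z \<in> {z. 1/(a*z) \<in> \<int>}"
    then obtain k where k: "1/(a*z) = of_int k" by (auto elim: Ints_cases)
    have "z = 1/(a * (1/(a*z)))" using assms by (cases "z = 0") (auto simp: field_simps)
    then show "z \<in> (\<lambda>k::int. 1/(a * of_int k)) ` UNIV" using k by auto
  qed
  then show ?thesis by (rule countable_subset) auto
qed

lemma K_tendsto: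
  assumes x: "x \<longlonglongrightarrow> a" and a: "a > 0" and z: "z > 0" and nz: "1/(a*z) \<notin> \<int>"
  shows "(\<lambda>n. K (x n) z) \<longlonglongrightarrow> K a z"
proof -
  have ev: "eventually (\<lambda>n. x n > 0) sequentially"
    using order_tendstoD(1)[OF x a] .
  have "(\<lambda>n. 1/(x n * z)) \<longlonglongrightarrow> 1/(a*z)"
    using a z by (intro tendsto_intros x) auto
  then have "(\<lambda>n. frac (1/(x n * z))) \<longlonglongrightarrow> frac (1/(a*z))"
    by (rule isCont_tendsto_compose[OF continuous_frac[OF nz]])
  then have "(\<lambda>n. 1/2 - frac (1/(x n * z))) \<longlonglongrightarrow> 1/2 - frac (1/(a*z))"
    by (intro tendsto_intros)
  moreover have "eventually (\<lambda>n. 1/2 - frac (1/(x n * z)) = K (x n) z) sequentially"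
    using ev by eventually_elim (use z in \<open>auto simp: K_def\<close>)
  ultimately have "(\<lambda>n. K (x n) z) \<longlonglongrightarrow> 1/2 - frac (1/(a*z))"
    by (rule Lim_transform_eventually)
  then show ?thesis using a z by (simp add: K_def)
qed

lemma K2_cont:
  assumes a: "a > 0" and b: "b > 0"
  shows "continuous (at (a,b) within Q) (\<lambda>(x::real, y::real). K2 x y)"
proof (rule continuous_within_sequentiallyI)
  fix u :: "nat \<Rightarrow> real \<times> real"
  assume u: "u \<longlonglongrightarrow> (a,b)"
  define x where "x n = fst (u n)" for n
  define y where "y n = snd (u n)" for n
  have x: "x \<longlonglongrightarrow> a" unfolding x_def using tendsto_fst[OF u] by simp
  have y: "y \<longlonglongrightarrow> b" unfolding y_def using tendsto_snd[OF u] by simp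
  define N where "N = {z. 1/(a*z) \<in> \<int>} \<union> {z. 1/(b*z) \<in> \<int>}"
  have negN: "negligible N"
    unfolding N_def using a b
    by (intro countable_negligible countable_Un countable_inv_ints) auto
  define S where "S = {0..1::real} - N"
  have eqI: "integral {0..1} f = integral S f" for f :: "real \<Rightarrow> real"
    by (rule integral_spike_set) (auto simp: S_def intro: negligible_subset[OF negN])
  have "(\<lambda>k. integral S (\<lambda>z. K (x k) z * K z (y k))) \<longlonglongrightarrow> integral S (\<lambda>z. K a z * K z b)"
  proof (rule dominated_convergence(2)[where h="\<lambda>_. 1/4"])
    show "(\<lambda>z. K (x k) z * K z (y k)) integrable_on S" for k
      unfolding S_def
      by (rule integrable_spike_set[OF Kprod_integrable]) (auto intro: negligible_subset[OF negN])
    show "(\<lambda>_. 1/4::real) integrable_on S"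
      unfolding S_def
      by (rule integrable_spike_set[OF integrable_const_ivl]) (auto intro: negligible_subset[OF negN])
    show "norm (K (x k) z * K z (y k)) \<le> 1/4" for k z
      using Kprod_bound by simp
    fix z assume z: "z \<in> S"
    then have z0: "z \<noteq> 0" by (auto simp: S_def N_def)
    with z have zp: "z > 0" by (auto simp: S_def)
    have n1: "1/(a*z) \<notin> \<int>" "1/(b*z) \<notin> \<int>" using z by (auto simp: S_def N_def)
    have t1: "(\<lambda>k. K (x k) z) \<longlonglongrightarrow> K a z" by (rule K_tendsto[OF x a zp n1(1)])
    have t2: "(\<lambda>k. K (y k) z) \<longlonglongrightarrow> K b z" by (rule K_tendsto[OF y b zp n1(2)])
    have "K z w = K w z" for w by (simp add: K_def mult.commute)
    then show "(\<lambda>k. K (x k) z * K z (y k)) \<longlonglongrightarrow> K a z * K z b"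
      using tendsto_mult[OF t1 t2] by simp
  qed
  then show "(\<lambda>n. (\<lambda>(x, y). K2 x y) (u n)) \<longlonglongrightarrow> (\<lambda>(x, y). K2 x y) (a, b)"
    by (simp add: K2_def eqI x_def y_def case_prod_beta)
qed
definition gg :: "real \<Rightarrow> real" where "gg v = 1/2 - frac v"
definition P1 :: "real \<Rightarrow> real" where
  "P1 v = frac v * (frac v - 1) * (2 * frac v - 1) / 6"

lemma P1_bound: "\<bar>P1 v\<bar> \<le> 1/6"
proof -
  have a: "0 \<le> frac v" "frac v < 1" by (auto simp: frac_lt_1)
  have "\<bar>frac v * (frac v - 1) * (2 * frac v - 1)\<bar> = \<bar>frac v\<bar> * \<bar>frac v - 1\<bar> * \<bar>2 * frac v - 1\<bar>"
    by (simp add: abs_mult)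
  also have "\<dots> \<le> 1 * 1 * 1"
  proof (intro mult_mono)
    show "\<bar>2 * frac v - 1\<bar> \<le> 1" "\<bar>frac v\<bar> \<le> 1" "\<bar>frac v - 1\<bar> \<le> 1" using a by linarith+
  qed auto
  finally show ?thesis unfolding P1_def by simp
qed

lemma frac_local:
  assumes "(v::real) \<notin> \<int>"
  shows "eventually (\<lambda>w. frac w = w - of_int \<lfloor>v\<rfloor>) (nhds v)"
proof -
  have "\<forall>\<^sub>F w in at v. \<lfloor>w\<rfloor> = \<lfloor>v\<rfloor>"
  proof (rule eventually_floor_eq[OF _ assms])
    show "((\<lambda>w. w) \<longlongrightarrow> v) (at v)" by (rule tendsto_ident_at)
  qed
  then show ?thesis
    unfolding eventually_at_filter
    by eventually_elim (auto simp: frac_def)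
qed

lemma P1_deriv:
  assumes "v \<notin> \<int>"
  shows "(P1 has_real_derivative ((gg v)\<^sup>2 - 1/12)) (at v)"
proof -
  define n where "n = real_of_int \<lfloor>v\<rfloor>"
  define q where "q w = (w - n) * ((w - n) - 1) * (2 * (w - n) - 1) / 6" for w
  have "(q has_real_derivative ((v-n)\<^sup>2 - (v - n) + 1/6)) (at v)"
    unfolding q_def
    apply (rule derivative_eq_intros refl)+
    apply (simp add: field_simps power2_eq_square)
    apply algebra
    done
  moreover have "eventually (\<lambda>w. P1 w = q w) (nhds v)"
    using frac_local[OF assms] by eventually_elim (simp add: P1_def q_def n_def)
  ultimately have "(P1 has_real_derivative ((v-n)\<^sup>2 - (v - n) + 1/6)) (at v)"
    using DERIV_cong_ev[OF refl _ refl] by blast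
  moreover have "frac v = v - n" by (simp add: n_def frac_def)
  moreover have "(1/2 - (v - n))\<^sup>2 - 1/12 = (v-n)\<^sup>2 - (v - n) + 1/6"
    by (simp add: field_simps power2_eq_square)
  ultimately show ?thesis unfolding gg_def by simp
qed

lemma P1_cont: "isCont P1 v"
proof (cases "v \<in> \<int>")
  case False
  then show ?thesis using P1_deriv DERIV_isCont by blast
next
  case True
  then obtain n where n: "v = of_int n" by (auto elim: Ints_cases)
  have P1v: "P1 v = 0" using n by (auto simp: P1_def)
  have r: "continuous (at_right v) P1"
  proof -
    let ?q = "\<lambda>w. (w - v) * ((w - v) - 1) * (2 * (w - v) - 1) / 6"
    have "(?q \<longlongrightarrow> ?q v) (at_right v)"
      by (intro tendsto_intros) auto
    moreover have "eventually (\<lambda>w. ?q w = P1 w) (at_right v)"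
    proof (rule eventually_at_rightI[where b="v+1"])
      fix w assume w: "w \<in> {v<..<v+1}"
      have "frac w = w - v"
        using w n by (subst frac_unique_iff) auto
      then show "?q w = P1 w" by (simp add: P1_def)
    qed auto
    ultimately have "(P1 \<longlongrightarrow> ?q v) (at_right v)"
      by (rule Lim_transform_eventually)
    then show ?thesis using P1v by (simp add: continuous_within)
  qed
  have l: "continuous (at_left v) P1"
  proof -
    let ?q = "\<lambda>w. (w - v + 1) * ((w - v + 1) - 1) * (2 * (w - v + 1) - 1) / 6"
    have "(?q \<longlongrightarrow> ?q v) (at_left v)"
      by (intro tendsto_intros) auto
    moreover have "eventually (\<lambda>w. ?q w = P1 w) (at_left v)"
    proof (rule eventually_at_leftI[where a="v-1"])
      fix w assume w: "w \<in> {v-1<..<v}"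
      have "frac w = w - v + 1"
        using w n by (subst frac_unique_iff) (auto simp: algebra_simps)
      then show "?q w = P1 w" by (simp add: P1_def)
    qed auto
    ultimately have "(P1 \<longlongrightarrow> ?q v) (at_left v)"
      by (rule Lim_transform_eventually)
    then show ?thesis using P1v by (simp add: continuous_within)
  qed
  show ?thesis using l r continuous_at_split by blast
qed
lemma P1_cont_on: "continuous_on S (\<lambda>z. P1 (f z))" if "continuous_on S f"
  using continuous_on_compose2[OF continuous_at_imp_continuous_on[of UNIV P1] that] P1_cont by auto

lemma finite_int_hits:
  assumes a: "\<alpha> > 0" and e: "\<epsilon> > 0"
  shows "finite {z \<in> {\<epsilon>..1::real}. \<alpha>/z + \<beta> \<in> \<int>}"
proof -
  define M where "M = \<lceil>\<alpha>/\<epsilon> + \<bar>\<beta>\<bar>\<rceil>"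
  have "{z \<in> {\<epsilon>..1::real}. \<alpha>/z + \<beta> \<in> \<int>} \<subseteq> (\<lambda>k::int. \<alpha>/(of_int k - \<beta>)) ` {-M..M}"
  proof
    fix z assume z: "z \<in> {z \<in> {\<epsilon>..1::real}. \<alpha>/z + \<beta> \<in> \<int>}"
    then obtain k where k: "\<alpha>/z + \<beta> = of_int k" by (auto elim: Ints_cases)
    have zp: "z > 0" "z \<ge> \<epsilon>" using z e by auto
    have "0 < \<alpha>/z" using a zp by simp
    moreover have "\<alpha>/z \<le> \<alpha>/\<epsilon>" using a zp e by (intro divide_left_mono) auto
    ultimately have "\<bar>of_int k\<bar> \<le> \<alpha>/\<epsilon> + \<bar>\<beta>\<bar>" using k by linarith
    then have "\<bar>k\<bar> \<le> M" unfolding M_def by linarith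
    moreover have "of_int k - \<beta> = \<alpha>/z" using k by simp
    then have "z = \<alpha>/(of_int k - \<beta>)" using zp a by simp
    ultimately show "z \<in> (\<lambda>k::int. \<alpha>/(of_int k - \<beta>)) ` {-M..M}" by (auto intro!: image_eqI[where x=k])
  qed
  then show ?thesis by (rule finite_subset) auto
qed

lemma sq_integral_est:
  assumes a: "\<alpha> > 0" and e: "0 < \<epsilon>" "\<epsilon> \<le> 1"
  shows "(\<lambda>z. (gg (\<alpha>/z+\<beta>))\<^sup>2) integrable_on {\<epsilon>..1}"
    and "\<bar>integral {\<epsilon>..1} (\<lambda>z. (gg (\<alpha>/z+\<beta>))\<^sup>2) - (1-\<epsilon>)/12\<bar> \<le> 1/\<alpha>"
proof -
  define F where "F z = z\<^sup>2 * P1 (\<alpha>/z+\<beta>)" for z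
  define G where "G z = 2 * z * P1 (\<alpha>/z+\<beta>)" for z
  define h where "h z = (gg (\<alpha>/z+\<beta>))\<^sup>2" for z
  define D where "D z = G z - \<alpha> * (h z - 1/12)" for z
  define E where "E = {z \<in> {\<epsilon>..1::real}. \<alpha>/z + \<beta> \<in> \<int>}"
  have finE: "finite E" unfolding E_def by (rule finite_int_hits[OF a e(1)])
  have contid: "continuous_on {\<epsilon>..1} (\<lambda>z. \<alpha>/z+\<beta>)"
    using e by (intro continuous_intros) auto
  have Fc: "continuous_on {\<epsilon>..1} F"
    unfolding F_def by (intro continuous_intros P1_cont_on contid)
  have Gc: "continuous_on {\<epsilon>..1} G"
    unfolding G_def by (intro continuous_intros P1_cont_on contid)
  have Fd: "(F has_vector_derivative D z) (at z)" if z: "z \<in> {\<epsilon><..<1} - E" for z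
  proof -
    have zp: "z > 0" using z e by auto
    have nz: "\<alpha>/z+\<beta> \<notin> \<int>" using z by (auto simp: E_def)
    have d0: "((\<lambda>z. \<alpha>/z+\<beta>) has_real_derivative (-\<alpha>/z\<^sup>2)) (at z)"
      using zp by (auto intro!: derivative_eq_intros simp: power2_eq_square field_simps)
    have d1: "((\<lambda>z. P1 (\<alpha>/z+\<beta>)) has_real_derivative ((gg (\<alpha>/z+\<beta>))\<^sup>2 - 1/12) * (-\<alpha>/z\<^sup>2)) (at z)"
      by (rule DERIV_chain2[OF P1_deriv[OF nz] d0])
    have d2: "((\<lambda>z. z\<^sup>2) has_real_derivative 2*z) (at z)"
      by (auto intro!: derivative_eq_intros)
    have "(F has_real_derivative (2*z) * P1 (\<alpha>/z+\<beta>) + (((gg (\<alpha>/z+\<beta>))\<^sup>2 - 1/12) * (-\<alpha>/z\<^sup>2)) * z\<^sup>2) (at z)"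
      unfolding F_def by (rule DERIV_mult[OF d2 d1])
    moreover have "(2*z) * P1 (\<alpha>/z+\<beta>) + (((gg (\<alpha>/z+\<beta>))\<^sup>2 - 1/12) * (-\<alpha>/z\<^sup>2)) * z\<^sup>2 = D z"
      using zp unfolding D_def G_def h_def by (simp add: field_simps power2_eq_square)
    ultimately show ?thesis by (simp add: has_real_derivative_iff_has_vector_derivative)
  qed
  have FTC: "(D has_integral (F 1 - F \<epsilon>)) {\<epsilon>..1}"
    by (rule fundamental_theorem_of_calculus_interior_strong[OF finE e(2) Fd Fc]) auto
  have Gi: "(G has_integral integral {\<epsilon>..1} G) {\<epsilon>..1}"
    using integrable_continuous_interval[OF Gc] by (simp add: has_integral_integral)
  have heq: "h z = 1/12 + (G z - D z)/\<alpha>" for z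
    using a unfolding D_def by (simp add: field_simps)
  have hi: "(h has_integral ((1/12) * (1 - \<epsilon>) + (integral {\<epsilon>..1} G - (F 1 - F \<epsilon>))/\<alpha>)) {\<epsilon>..1}"
  proof -
    have "((\<lambda>z. 1/12 + (G z - D z)/\<alpha>) has_integral (Henstock_Kurzweil_Integration.content {\<epsilon>..1} *\<^sub>R (1/12) + (integral {\<epsilon>..1} G - (F 1 - F \<epsilon>))/\<alpha>)) {\<epsilon>..1}"
      by (intro has_integral_add has_integral_const_real has_integral_divide has_integral_diff Gi FTC)
    then show ?thesis using e unfolding heq by simp
  qed
  then show "(\<lambda>z. (gg (\<alpha>/z+\<beta>))\<^sup>2) integrable_on {\<epsilon>..1}" unfolding h_def by blast
  have int_eq: "integral {\<epsilon>..1} (\<lambda>z. (gg (\<alpha>/z+\<beta>))\<^sup>2) = (1/12) * (1 - \<epsilon>) + (integral {\<epsilon>..1} G - (F 1 - F \<epsilon>))/\<alpha>"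
    using integral_unique[OF hi] unfolding h_def by simp
  have bG: "norm (integral {\<epsilon>..1} G) \<le> 1/3 * (1 - \<epsilon>)"
  proof (rule integral_bound[OF e(2) Gc])
    fix t assume t: "t \<in> {\<epsilon>..1}"
    have "\<bar>G t\<bar> = 2 * \<bar>t\<bar> * \<bar>P1 (\<alpha>/t+\<beta>)\<bar>" unfolding G_def by (simp add: abs_mult)
    also have "\<dots> \<le> 2 * 1 * (1/6)" using t e P1_bound by (intro mult_mono) auto
    finally show "norm (G t) \<le> 1/3" by simp
  qed
  have bF: "\<bar>F x\<bar> \<le> 1/6" if "0 \<le> x" "x \<le> 1" for x
  proof -
    have "\<bar>F x\<bar> = x\<^sup>2 * \<bar>P1 (\<alpha>/x+\<beta>)\<bar>" unfolding F_def by (simp add: abs_mult)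
    also have "\<dots> \<le> 1 * (1/6)" using that P1_bound by (intro mult_mono) (auto simp: power_le_one)
    finally show ?thesis by simp
  qed
  have bG': "\<bar>integral {\<epsilon>..1} G\<bar> \<le> 1/3"
    using bG e by simp
  have X: "\<bar>integral {\<epsilon>..1} G - (F 1 - F \<epsilon>)\<bar> \<le> 1"
    using bG' bF[of 1] bF[of \<epsilon>] e unfolding abs_le_iff by linarith
  have "\<bar>(integral {\<epsilon>..1} G - (F 1 - F \<epsilon>))/\<alpha>\<bar> = \<bar>integral {\<epsilon>..1} G - (F 1 - F \<epsilon>)\<bar>/\<alpha>"
    using a by simp
  also have "\<dots> \<le> 1/\<alpha>" using X a by (intro divide_right_mono) auto
  finally have "\<bar>(integral {\<epsilon>..1} G - (F 1 - F \<epsilon>))/\<alpha>\<bar> \<le> 1/\<alpha>" .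
  then show "\<bar>integral {\<epsilon>..1} (\<lambda>z. (gg (\<alpha>/z+\<beta>))\<^sup>2) - (1-\<epsilon>)/12\<bar> \<le> 1/\<alpha>"
    unfolding int_eq by simp
qed
lemma gg_double: "gg (2 * v) = gg v + gg (v + 1/2)"
proof -
  have fl: "v - frac v \<in> \<int>" by (simp add: frac_def)
  have f0: "0 \<le> frac v" "frac v < 1" by (auto simp: frac_lt_1)
  show ?thesis
  proof (cases "frac v < 1/2")
    case True
    have "frac (v + 1/2) = frac v + 1/2"
      using True f0 fl by (subst frac_unique_iff) auto
    moreover have "frac (2 * v) = 2 * frac v"
    proof (subst frac_unique_iff)
      have "2 * v - 2 * frac v = 2 * (v - frac v)" by simp
      moreover have "2 * (v - frac v) \<in> \<int>" using fl by (intro Ints_mult) auto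
      ultimately show "2 * v - 2 * frac v \<in> \<int> \<and> 0 \<le> 2 * frac v \<and> 2 * frac v < 1"
        using fl True f0 by auto
    qed
    ultimately show ?thesis unfolding gg_def by simp
  next
    case False
    have "frac (v + 1/2) = frac v - 1/2"
    proof (subst frac_unique_iff)
      have "v + 1/2 - (frac v - 1/2) = (v - frac v) + 1" by simp
      moreover have "(v - frac v) + 1 \<in> \<int>" using fl by (intro Ints_add) auto
      ultimately show "v + 1/2 - (frac v - 1/2) \<in> \<int> \<and> 0 \<le> frac v - 1/2 \<and> frac v - 1/2 < 1"
        using fl False f0 by auto
    qed
    moreover have "frac (2 * v) = 2 * frac v - 1"
    proof (subst frac_unique_iff)
      have eq: "2 * v - (2 * frac v - 1) = 2 * (v - frac v) + 1" by simp
      have "2 * (v - frac v) + 1 \<in> \<int>" using fl by (intro Ints_add Ints_mult) auto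
      then show "2 * v - (2 * frac v - 1) \<in> \<int> \<and> 0 \<le> 2 * frac v - 1 \<and> 2 * frac v - 1 < 1"
        using False f0 unfolding eq by auto
    qed
    ultimately show ?thesis unfolding gg_def by simp
  qed
qed

lemma gg_prod: "gg v * gg (2 * v) = ((gg v)\<^sup>2 + (gg (2 * v))\<^sup>2 - (gg (v + 1/2))\<^sup>2) / 2"
  unfolding gg_double by (simp add: power2_eq_square algebra_simps)

lemma K_gg: "x \<noteq> 0 \<Longrightarrow> z \<noteq> 0 \<Longrightarrow> K x z = gg (1/(x*z))"
  by (simp add: K_def gg_def)

lemma K2_split:
  assumes "0 \<le> \<epsilon>" "\<epsilon> \<le> 1"
  shows "K2 x y = integral {0..\<epsilon>} (\<lambda>z. K x z * K z y) + integral {\<epsilon>..1} (\<lambda>z. K x z * K z y)"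
  unfolding K2_def
  using Henstock_Kurzweil_Integration.integral_combine[where a=0 and c=\<epsilon> and b=1 and f="\<lambda>z. K x z * K z y"] assms Kprod_integrable by simp

lemma head_bound:
  assumes "0 \<le> \<epsilon>"
  shows "\<bar>integral {0..\<epsilon>} (\<lambda>z. K x z * K z y)\<bar> \<le> \<epsilon>/4"
proof -
  have "norm (integral {0..\<epsilon>} (\<lambda>z. K x z * K z y)) \<le> integral {0..\<epsilon>} (\<lambda>z. 1/4::real)"
  proof (rule integral_norm_bound_integral)
    show "norm (K x z * K z y) \<le> 1/4" for z using Kprod_bound[of x z y] by simp
  qed (auto intro: Kprod_integrable)
  then show ?thesis using assms by simp
qed

lemma diag_lower:
  assumes t: "0 < t" "t \<le> 1"
  shows "K2 t t \<ge> (1 - 1/100)/12 - t"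
proof -
  define \<epsilon> :: real where "\<epsilon> = 1/100"
  have eq: "integral {\<epsilon>..1} (\<lambda>z. K t z * K z t) = integral {\<epsilon>..1} (\<lambda>z. (gg ((1/t)/z + 0))\<^sup>2)"
  proof (rule integral_cong)
    fix z assume "z \<in> {\<epsilon>..1}"
    then have "z > 0" by (auto simp: \<epsilon>_def)
    then show "K t z * K z t = (gg ((1/t)/z + 0))\<^sup>2"
      using t by (simp add: K_gg power2_eq_square mult.commute)
  qed
  have est: "\<bar>integral {\<epsilon>..1} (\<lambda>z. (gg ((1/t)/z + 0))\<^sup>2) - (1-\<epsilon>)/12\<bar> \<le> 1/(1/t)"
    by (rule sq_integral_est(2)) (use t in \<open>auto simp: \<epsilon>_def\<close>)
  have nn: "integral {0..\<epsilon>} (\<lambda>z. K t z * K z t) \<ge> 0"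
  proof (rule integral_nonneg)
    show "(\<lambda>z. K t z * K z t) integrable_on {0..\<epsilon>}" by (rule Kprod_integrable)
    fix z show "0 \<le> K t z * K z t" by (simp add: K_def mult.commute)
  qed
  have "K2 t t = integral {0..\<epsilon>} (\<lambda>z. K t z * K z t) + integral {\<epsilon>..1} (\<lambda>z. K t z * K z t)"
    by (rule K2_split) (auto simp: \<epsilon>_def)
  then show ?thesis using eq est nn t unfolding \<epsilon>_def abs_le_iff by simp
qed

lemma off_upper:
  assumes t: "0 < t" "t \<le> 1"
  shows "K2 t (t/2) \<le> (1/100)/4 + (1 - 1/100)/24 + 5/4 * t"
proof -
  define \<epsilon> :: real where "\<epsilon> = 1/100"
  have e: "0 < \<epsilon>" "\<epsilon> \<le> 1" by (auto simp: \<epsilon>_def)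
  define h1 where "h1 z = (gg ((1/t)/z + 0))\<^sup>2" for z
  define h2 where "h2 z = (gg ((2/t)/z + 0))\<^sup>2" for z
  define h3 where "h3 z = (gg ((1/t)/z + 1/2))\<^sup>2" for z
  have i1: "h1 integrable_on {\<epsilon>..1}" unfolding h1_def by (rule sq_integral_est(1)) (use t e in auto)
  have i2: "h2 integrable_on {\<epsilon>..1}" unfolding h2_def by (rule sq_integral_est(1)) (use t e in auto)
  have i3: "h3 integrable_on {\<epsilon>..1}" unfolding h3_def by (rule sq_integral_est(1)) (use t e in auto)
  have e1: "\<bar>integral {\<epsilon>..1} h1 - (1-\<epsilon>)/12\<bar> \<le> 1/(1/t)" unfolding h1_def by (rule sq_integral_est(2)) (use t e in auto)
  have e2: "\<bar>integral {\<epsilon>..1} h2 - (1-\<epsilon>)/12\<bar> \<le> 1/(2/t)" unfolding h2_def by (rule sq_integral_est(2)) (use t e in auto)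
  have e3: "\<bar>integral {\<epsilon>..1} h3 - (1-\<epsilon>)/12\<bar> \<le> 1/(1/t)" unfolding h3_def by (rule sq_integral_est(2)) (use t e in auto)
  have eq: "integral {\<epsilon>..1} (\<lambda>z. K t z * K z (t/2)) = integral {\<epsilon>..1} (\<lambda>z. (h1 z + h2 z - h3 z) / 2)"
  proof (rule integral_cong)
    fix z assume "z \<in> {\<epsilon>..1}"
    then have z: "z > 0" using e by auto
    have a: "K t z = gg (1/(t*z))" using z t by (simp add: K_gg)
    have b: "K z (t/2) = gg (2 * (1/(t*z)))" using z t by (simp add: K_gg ac_simps)
    show "K t z * K z (t/2) = (h1 z + h2 z - h3 z) / 2"
      unfolding a b gg_prod h1_def h2_def h3_def by (simp add: field_simps)
  qed
  have "integral {\<epsilon>..1} (\<lambda>z. (h1 z + h2 z - h3 z) / 2) = (integral {\<epsilon>..1} h1 + integral {\<epsilon>..1} h2 - integral {\<epsilon>..1} h3) / 2"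
    using i1 i2 i3 by (simp add: integral_diff integral_add integrable_add integral_divide)
  then have I: "integral {\<epsilon>..1} (\<lambda>z. K t z * K z (t/2)) = (integral {\<epsilon>..1} h1 + integral {\<epsilon>..1} h2 - integral {\<epsilon>..1} h3) / 2"
    using eq by simp
  have e1': "\<bar>integral {\<epsilon>..1} h1 - (1-\<epsilon>)/12\<bar> \<le> t" using e1 by simp
  have e2': "\<bar>integral {\<epsilon>..1} h2 - (1-\<epsilon>)/12\<bar> \<le> t/2" using e2 by simp
  have e3': "\<bar>integral {\<epsilon>..1} h3 - (1-\<epsilon>)/12\<bar> \<le> t" using e3 by simp
  have "K2 t (t/2) = integral {0..\<epsilon>} (\<lambda>z. K t z * K z (t/2)) + integral {\<epsilon>..1} (\<lambda>z. K t z * K z (t/2))"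
    by (rule K2_split) (use e in auto)
  moreover have "\<bar>integral {0..\<epsilon>} (\<lambda>z. K t z * K z (t/2))\<bar> \<le> \<epsilon>/4"
    by (rule head_bound) (use e in auto)
  then have "integral {0..\<epsilon>} (\<lambda>z. K t z * K z (t/2)) \<le> \<epsilon>/4" by linarith
  moreover have "integral {\<epsilon>..1} h1 \<le> (1-\<epsilon>)/12 + t" using e1' by linarith
  moreover have "integral {\<epsilon>..1} h2 \<le> (1-\<epsilon>)/12 + t/2" using e2' by linarith
  moreover have "integral {\<epsilon>..1} h3 \<ge> (1-\<epsilon>)/12 - t" using e3' by linarith
  ultimately show ?thesis using I unfolding \<epsilon>_def by argo
qed
lemma approx_pt:
  fixes f :: "real \<times> real \<Rightarrow> real"
  assumes cf: "\<forall>p\<in>Q. dist p (0,0) < \<delta> \<longrightarrow> dist (f p) c < e"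
    and ca: "continuous (at a within Q) (\<lambda>(x::real, y::real). K2 x y)"
    and aQ: "a \<in> Q" and da: "dist a (0,0) < \<delta>/2" and e: "e > 0"
    and dense: "Q \<subseteq> closure {p \<in> Q. f p = K2 (fst p) (snd p)}"
  shows "\<bar>c - K2 (fst a) (snd a)\<bar> < 2*e"
proof -
  obtain r where r: "r > 0" "\<forall>p\<in>Q. dist p a < r \<longrightarrow> dist ((\<lambda>(x, y). K2 x y) p) ((\<lambda>(x, y). K2 x y) a) < e"
    using ca e unfolding continuous_within_eps_delta by blast
  have \<delta>: "\<delta> > 0" using da by (metis dist_not_less_zero half_gt_zero_iff less_le_trans linorder_not_le order_less_imp_le) 
  have "a \<in> closure {p \<in> Q. f p = K2 (fst p) (snd p)}" using dense aQ by blast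
  then obtain p where p: "p \<in> {p \<in> Q. f p = K2 (fst p) (snd p)}" "dist p a < min r (\<delta>/2)"
    unfolding closure_approachable using r \<delta> by (metis min_less_iff_conj half_gt_zero_iff)
  have "dist p (0,0) \<le> dist p a + dist a (0,0)" by (rule dist_triangle)
  then have "dist p (0,0) < \<delta>" using p da by linarith
  then have 1: "\<bar>f p - c\<bar> < e" using cf p by (auto simp: dist_real_def)
  have 2: "\<bar>K2 (fst p) (snd p) - K2 (fst a) (snd a)\<bar> < e"
    using r(2) p by (auto simp: dist_real_def case_prod_beta)
  show ?thesis using 1 2 p by auto
qed

lemma dist0_le: "dist (x::real, y::real) (0,0) \<le> \<bar>x\<bar> + \<bar>y\<bar>"
proof -
  have "dist (x, y) (0,0) = norm (x, y)" by (simp add: dist_norm)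
  also have "\<dots> \<le> norm x + norm y" by (rule norm_Pair_le)
  finally show ?thesis by simp
qed

lemma no_f:
  "\<not> (\<exists>f :: real \<times> real \<Rightarrow> real.
          continuous (at (0,0) within ({0..1} \<times> {0..1})) f \<and>
          {0..1} \<times> {0..1} \<subseteq> closure {p \<in> {0..1} \<times> {0..1}. f p = K2 (fst p) (snd p)})"
proof
  assume "\<exists>f :: real \<times> real \<Rightarrow> real.
          continuous (at (0,0) within ({0..1} \<times> {0..1})) f \<and>
          {0..1} \<times> {0..1} \<subseteq> closure {p \<in> {0..1} \<times> {0..1}. f p = K2 (fst p) (snd p)}"
  then obtain f :: "real \<times> real \<Rightarrow> real" where
    cf: "continuous (at (0,0) within ({0..1} \<times> {0..1})) f" and
    dense: "{0..1} \<times> {0..1} \<subseteq> closure {p \<in> {0..1} \<times> {0..1}. f p = K2 (fst p) (snd p)}"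
    by blast
  define e :: real where "e = 1/1000"
  obtain \<delta> where \<delta>: "\<delta> > 0" "\<forall>p\<in>{0..1} \<times> {0..1}. dist p (0,0) < \<delta> \<longrightarrow> dist (f p) (f (0,0)) < e"
    using cf unfolding continuous_within_eps_delta e_def by (meson divide_pos_pos zero_less_one zero_less_numeral)
  define t where "t = min (1/100) (\<delta>/8)"
  have t: "0 < t" "t \<le> 1/100" "t \<le> \<delta>/8" using \<delta> by (auto simp: t_def)
  have A: "\<bar>f (0,0) - K2 t t\<bar> < 2*e"
  proof -
    have "\<bar>f (0,0) - K2 (fst (t,t)) (snd (t,t))\<bar> < 2*e"
    proof (rule approx_pt[OF \<delta>(2) K2_cont _ _ _ dense])
      show "dist (t, t) (0, 0) < \<delta> / 2" using dist0_le[of t t] t by auto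
    qed (use t in \<open>auto simp: e_def\<close>)
    then show ?thesis by simp
  qed
  have B: "\<bar>f (0,0) - K2 t (t/2)\<bar> < 2*e"
  proof -
    have "\<bar>f (0,0) - K2 (fst (t,t/2)) (snd (t,t/2))\<bar> < 2*e"
    proof (rule approx_pt[OF \<delta>(2) K2_cont _ _ _ dense])
      show "dist (t, t/2) (0, 0) < \<delta> / 2" using dist0_le[of t "t/2"] t by auto
    qed (use t in \<open>auto simp: e_def\<close>)
    then show ?thesis by simp
  qed
  have "K2 t t \<ge> (1 - 1/100)/12 - t" using diag_lower t by auto
  moreover have "K2 t (t/2) \<le> (1/100)/4 + (1 - 1/100)/24 + 5/4 * t" using off_upper t by auto
  ultimately show False using A B t unfolding e_def abs_less_iff by argo
qed

theorem theorem2p9: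
  shows "\<not> continuous (at (0,0) within ({0..1} \<times> {0..1})) (\<lambda>(x::real, y::real). K2 x y)
    \<and> \<not> (\<exists>f :: real \<times> real \<Rightarrow> real.
          continuous (at (0,0) within ({0..1} \<times> {0..1})) f \<and>
          {0..1} \<times> {0..1} \<subseteq> closure {p \<in> {0..1} \<times> {0..1}. f p = K2 (fst p) (snd p)})"
proof
  show "\<not> continuous (at (0,0) within ({0..1} \<times> {0..1})) (\<lambda>(x::real, y::real). K2 x y)"
  proof
    assume c: "continuous (at (0,0) within ({0..1} \<times> {0..1})) (\<lambda>(x::real, y::real). K2 x y)"
    have "{0..1} \<times> {0..1} \<subseteq> closure {p \<in> {0..1::real} \<times> {0..1::real}. (\<lambda>(x, y). K2 x y) p = K2 (fst p) (snd p)}"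
      by (simp add: case_prod_beta closure_subset)
    then show False using no_f c by blast
  qed
  show "\<not> (\<exists>f :: real \<times> real \<Rightarrow> real.
          continuous (at (0,0) within ({0..1} \<times> {0..1})) f \<and>
          {0..1} \<times> {0..1} \<subseteq> closure {p \<in> {0..1} \<times> {0..1}. f p = K2 (fst p) (snd p)})"
    by (rule no_f)
qed
end
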